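(* Let $S=\mathbb{C}[w,x,y,z]$ with its standard grading, let $f\in S$ be homogeneous, let $J=(f_w,f_x,f_y,f_z)\subset S$ be its Jacobian ideal, and let $p_1,\dots,p_r\in\mathbb{C}^4\setminus\{0\}$ be points. Let $M\ge 1$ and let $D_1,\dots,D_M$ be linear functionals on $S$ of the form $D_j(h)=\sum_{\alpha\in A_j}c_{j,\alpha}\,(\partial^{\alpha}h)(p_{i(j)})$, where $i(j)\in\{1,\dots,r\}$, $A_j\subset\mathbb{Z}_{\ge0}^4$ is finite and $c_{j,\alpha}\in\mathbb{C}\setminus\{0\}$. Let $m_0$ be an integer and assume: (i) for every $m\ge m_0$ and every homogeneous $h\in S_m$, one has $h\in J$ if and only if $D_j(h)=0$ for all $j=1,\dots,M$; (ii) $\dim_{\mathbb{C}}(S/J)_m=M$ for every $m\ge m_0$. Let $L\in S$ be homogeneous of degree $e\ge 0$ such that $L(p_i)\neq 0$ for all $i$, and such that for every $j$, every $\alpha\in A_j$ and every multi-index $\beta\neq 0$ with $\beta\le\alpha$ componentwise, $(\partial^{\beta}L)(p_{i(j)})=0$. Then for every $m\ge m_0$, multiplication by $L$ induces a well-defined isomorphism $(S/J)_m\to(S/J)_{m+e}$; in particular, a homogeneous $h$ of degree $m\ge m_0$ with $h\notin J$ satisfies $hL\notin J$, and if the classes of $h_1,\dots,h_M\in S_m$ form a basis of $(S/J)_m$, then the classes of $Lh_1,\dots,Lh_M$ form a basis of $(S/J)_{m+e}$.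
   Context: For $\alpha=(\alpha_0,\alpha_1,\alpha_2,\alpha_3)\in\mathbb{Z}_{\ge0}^4$, $\partial^{\alpha}=\frac{\partial^{\alpha_0}}{\partial w^{\alpha_0}}\frac{\partial^{\alpha_1}}{\partial x^{\alpha_1}}\frac{\partial^{\alpha_2}}{\partial y^{\alpha_2}}\frac{\partial^{\alpha_3}}{\partial z^{\alpha_3}}$, and $(\partial^\alpha h)(p)$ denotes this derivative evaluated at the point $p$. $(S/J)_m$ denotes the degree-$m$ graded piece of the graded quotient ring $S/J$. In the intended application $f$ defines a surface in $\mathbb{P}^3$ with ADE singularities, $p_i$ are representatives of its singular points, $M$ is the global Milnor number (sum of Milnor numbers), $D_j$ are the differential operators characterizing the Jacobian ideal near the singular points, and $m_0=3(\deg f-2)$. *)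

theory Defs
  imports Complex_Main "HOL-Library.Poly_Mapping" "HOL-Library.Numeral_Type"
begin

text \<open>The four variables w,x,y,z are the four
  elements 0,1,2,3 of the numeral type 4. A monomial is an exponent vector
  (finitely supported map 4 to nat), a polynomial is a finitely supported coefficient map.\<close>

type_synonym mono4 = "4 \<Rightarrow>\<^sub>0 nat"
type_synonym poly4 = "mono4 \<Rightarrow>\<^sub>0 complex"

definition mdeg :: "mono4 \<Rightarrow> nat" where
  "mdeg a = (\<Sum>i\<in>UNIV. Poly_Mapping.lookup a i)"

definition homog :: "nat \<Rightarrow> poly4 \<Rightarrow> bool" where
  "homog m h \<longleftrightarrow> (\<forall>a\<in>Poly_Mapping.keys h. mdeg a = m)"

definition const4 :: "complex \<Rightarrow> poly4" where
  "const4 c = Poly_Mapping.single 0 c"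

definition eval4 :: "(4 \<Rightarrow> complex) \<Rightarrow> poly4 \<Rightarrow> complex" where
  "eval4 p h = (\<Sum>a\<in>Poly_Mapping.keys h. Poly_Mapping.lookup h a * (\<Prod>i\<in>UNIV. p i ^ Poly_Mapping.lookup a i))"

definition pd :: "4 \<Rightarrow> poly4 \<Rightarrow> poly4" where
  "pd i h = (\<Sum>a\<in>Poly_Mapping.keys h. Poly_Mapping.single (a - Poly_Mapping.single i 1)
                              (of_nat (Poly_Mapping.lookup a i) * Poly_Mapping.lookup h a))"

definition pdm :: "(4 \<Rightarrow> nat) \<Rightarrow> poly4 \<Rightarrow> poly4" where
  "pdm \<alpha> h = ((pd 0 ^^ \<alpha> 0) \<circ> (pd 1 ^^ \<alpha> 1) \<circ> (pd 2 ^^ \<alpha> 2) \<circ> (pd 3 ^^ \<alpha> 3)) h"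

definition jac_ideal :: "poly4 \<Rightarrow> poly4 set" where
  "jac_ideal f = {h. \<exists>g :: 4 \<Rightarrow> poly4. h = (\<Sum>i\<in>UNIV. g i * pd i f)}"

definition quot_basis :: "poly4 set \<Rightarrow> nat \<Rightarrow> nat \<Rightarrow> (nat \<Rightarrow> poly4) \<Rightarrow> bool" where
  "quot_basis J m n hs \<longleftrightarrow>
     (\<forall>j\<in>{1..n}. homog m (hs j)) \<and>
     (\<forall>c :: nat \<Rightarrow> complex. (\<Sum>j=1..n. const4 (c j) * hs j) \<in> J \<longrightarrow> (\<forall>j\<in>{1..n}. c j = 0)) \<and>
     (\<forall>h. homog m h \<longrightarrow> (\<exists>c :: nat \<Rightarrow> complex. h - (\<Sum>j=1..n. const4 (c j) * hs j) \<in> J))"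

definition quot_dim_eq :: "poly4 set \<Rightarrow> nat \<Rightarrow> nat \<Rightarrow> bool" where
  "quot_dim_eq J m n \<longleftrightarrow> (\<exists>hs. quot_basis J m n hs)"

end

theory Submission
  imports Defs Jordan_Normal_Form.Determinant
begin



abbreviation lk where "lk \<equiv> Poly_Mapping.lookup"
abbreviation ks where "ks \<equiv> Poly_Mapping.keys"
abbreviation sg where "sg \<equiv> Poly_Mapping.single"

lemma lookup_minus_nat: "lk (a - b) k = lk a k - lk (b::mono4) k"
  by transfer simp

lemma expand: "(h::poly4) = (\<Sum>a\<in>ks h. sg a (lk h a))"
  by (rule poly_mapping_eqI)
     (simp add: lookup_sum lookup_single when_def in_keys_iff sum.delta' split: if_splits)

definition mon :: "(4 \<Rightarrow> complex) \<Rightarrow> mono4 \<Rightarrow> complex" where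
  "mon p a = (\<Prod>i\<in>UNIV. p i ^ lk a i)"

lemma mon_add: "mon p (a + b) = mon p a * mon p b"
  by (simp add: mon_def lookup_add power_add prod.distrib)

lemma eval_add: "eval4 p (f + g) = eval4 p f + eval4 p g"
  unfolding eval4_def
  by (rule setsum_keys_plus_distrib) (auto simp: distrib_right)

lemma eval_zero[simp]: "eval4 p 0 = 0" by (simp add: eval4_def)

lemma eval_single: "eval4 p (sg a c) = c * mon p a"
  by (simp add: eval4_def mon_def)

lemma eval_sum: "eval4 p (\<Sum>x\<in>X. g x) = (\<Sum>x\<in>X. eval4 p (g x))"
  by (induction X rule: infinite_finite_induct) (auto simp: eval_add)

lemma eval_uminus: "eval4 p (- f) = - eval4 p f"
  using eval_add[of p "-f" f] by (simp add: eq_neg_iff_add_eq_0)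

lemma eval_minus: "eval4 p (f - g) = eval4 p f - eval4 p g"
  using eval_add[of p f "-g"] eval_uminus[of p g] by simp

lemma eval_mult: "eval4 p (f * g) = eval4 p f * eval4 p g"
proof -
  have "f * g = (\<Sum>a\<in>ks f. sg a (lk f a)) * (\<Sum>b\<in>ks g. sg b (lk g b))"
    using expand[of f] expand[of g] by simp
  also have "\<dots> = (\<Sum>a\<in>ks f. \<Sum>b\<in>ks g. sg (a+b) (lk f a * lk g b))"
    by (simp add: sum_product mult_single)
  finally have "eval4 p (f*g) = (\<Sum>a\<in>ks f. \<Sum>b\<in>ks g. lk f a * lk g b * mon p (a+b))"
    by (simp add: eval_sum eval_single)
  also have "\<dots> = (\<Sum>a\<in>ks f. lk f a * mon p a) * (\<Sum>b\<in>ks g. lk g b * mon p b)"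
    by (simp add: sum_product mon_add mult_ac)
  finally show ?thesis by (simp add: eval4_def mon_def)
qed

lemma eval_const: "eval4 p (const4 c) = c"
  by (simp add: const4_def eval_single mon_def)

lemma eval_of_nat: "eval4 p (of_nat n) = of_nat n"
  by (simp add: single_of_nat[symmetric] eval_single mon_def del: single_of_nat)

definition pdsg :: "4 \<Rightarrow> mono4 \<Rightarrow> complex \<Rightarrow> poly4" where
  "pdsg i a v = sg (a - sg i 1) (of_nat (lk a i) * v)"

lemma pd_add: "pd i (f + g) = pd i f + pd i g"
  unfolding pd_def
  by (rule setsum_keys_plus_distrib) (auto simp: distrib_left single_add)

lemma pd_zero[simp]: "pd i 0 = 0" by (simp add: pd_def)

lemma pd_single: "pd i (sg a c) = pdsg i a c"
  by (simp add: pd_def pdsg_def)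

lemma pd_sum: "pd i (\<Sum>x\<in>X. g x) = (\<Sum>x\<in>X. pd i (g x))"
  by (induction X rule: infinite_finite_induct) (auto simp: pd_add)

lemma pd_uminus: "pd i (- f) = - pd i f"
  using pd_add[of i "-f" f] by (simp add: eq_neg_iff_add_eq_0)

lemma pd_minus: "pd i (f - g) = pd i f - pd i g"
  using pd_add[of i f "-g"] pd_uminus[of i g] by simp

lemma pdsg_mult: "pd i (sg a c * sg b d) = pdsg i a c * sg b d + sg a c * pdsg i b d"
proof -
  have sh: "lk x i > 0 \<Longrightarrow> x - sg i (Suc 0) + y = x + y - sg i (Suc 0)" for x y :: mono4
    by (rule poly_mapping_eqI) (auto simp: lookup_minus_nat lookup_add lookup_single when_def)
  have A: "pdsg i a c * sg b d = sg (a + b - sg i 1) (of_nat (lk a i) * c * d)"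
    by (cases "lk a i = 0") (simp_all add: pdsg_def mult_single sh)
  have B: "sg a c * pdsg i b d = sg (a + b - sg i 1) (of_nat (lk b i) * c * d)"
    using sh[of b a] by (cases "lk b i = 0") (simp_all add: pdsg_def mult_single add.commute mult_ac)
  have "pd i (sg a c * sg b d) = sg (a + b - sg i 1) ((of_nat (lk a i) * c * d) + (of_nat (lk b i) * c * d))"
    by (simp add: mult_single pd_single pdsg_def lookup_add algebra_simps)
  then show ?thesis unfolding A B by (simp add: single_add)
qed

lemma pd_mult: "pd i (f * g) = pd i f * g + f * pd i g"
proof -
  have "f * g = (\<Sum>a\<in>ks f. sg a (lk f a)) * (\<Sum>b\<in>ks g. sg b (lk g b))"
    using expand[of f] expand[of g] by simp
  also have "\<dots> = (\<Sum>a\<in>ks f. \<Sum>b\<in>ks g. sg a (lk f a) * sg b (lk g b))"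
    by (simp add: sum_product)
  finally have "pd i (f*g) = (\<Sum>a\<in>ks f. \<Sum>b\<in>ks g. pd i (sg a (lk f a)) * sg b (lk g b) + sg a (lk f a) * pd i (sg b (lk g b)))"
    by (simp add: pd_sum pdsg_mult pd_single)
  also have "\<dots> = pd i (\<Sum>a\<in>ks f. sg a (lk f a)) * (\<Sum>b\<in>ks g. sg b (lk g b)) + (\<Sum>a\<in>ks f. sg a (lk f a)) * pd i (\<Sum>b\<in>ks g. sg b (lk g b))"
    by (simp add: pd_sum sum_product sum.distrib)
  finally show ?thesis using expand[of f] expand[of g] by simp
qed

lemma pd_single0: "pd i (sg 0 c) = 0"
  by (simp add: pd_single pdsg_def)

lemma pd_const_mult: "pd i (const4 c * f) = const4 c * pd i f"
  by (simp add: pd_mult const4_def pd_single0)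

lemma pd_of_nat_mult: "pd i (of_nat n * f) = of_nat n * pd i f"
  by (simp add: pd_mult pd_single0 single_of_nat[symmetric] del: single_of_nat)




lemma funpow_leibniz:
  fixes Dop :: "poly4 \<Rightarrow> poly4"
  assumes add: "\<And>x y. Dop (x+y) = Dop x + Dop y"
    and mult: "\<And>x y. Dop (x*y) = Dop x * y + x * Dop y"
    and nat: "\<And>n x. Dop (of_nat n * x) = of_nat n * Dop x"
  shows "(Dop^^n) (a*b) = (\<Sum>k\<le>n. of_nat (n choose k) * ((Dop^^k) a * (Dop^^(n-k)) b))"
proof (induction n)
  case 0 then show ?case by simp
next
  case (Suc n)
  have z: "Dop 0 = 0" using add[of 0 0] by simp
  have sm: "Dop (\<Sum>x\<in>X. g x) = (\<Sum>x\<in>X. Dop (g x))" for X g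
    by (induction X rule: infinite_finite_induct) (auto simp: add z)
  define A where "A k = (Dop^^k) a" for k
  define B where "B k = (Dop^^k) b" for k
  have DA: "Dop (A k) = A (Suc k)" for k by (simp add: A_def)
  have DB: "Dop (B k) = B (Suc k)" for k by (simp add: B_def)
  have "(Dop^^Suc n) (a*b) = Dop (\<Sum>k\<le>n. of_nat (n choose k) * (A k * B (n-k)))"
    using Suc by (simp add: A_def B_def)
  also have "\<dots> = (\<Sum>k\<le>n. of_nat (n choose k) * (A (Suc k) * B (n-k))) + (\<Sum>k\<le>n. of_nat (n choose k) * (A k * B (Suc (n-k))))"
    by (simp only: sm nat) (simp add: mult DA DB distrib_left sum.distrib)
  also have "(\<Sum>k\<le>n. of_nat (n choose k) * (A k * B (Suc (n-k)))) = (\<Sum>k\<le>n. of_nat (n choose k) * (A k * B (Suc n - k)))"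
    by (rule sum.cong) (auto simp: Suc_diff_le)
  also have "\<dots> = (\<Sum>k\<le>Suc n. of_nat (n choose k) * (A k * B (Suc n - k)))"
    by simp
  also have "\<dots> = A 0 * B (Suc n) + (\<Sum>k\<le>n. of_nat (n choose Suc k) * (A (Suc k) * B (n - k)))"
    by (subst sum.atMost_Suc_shift) simp
  finally have "(Dop^^Suc n) (a*b) = A 0 * B (Suc n) + (\<Sum>k\<le>n. of_nat (Suc n choose Suc k) * (A (Suc k) * B (n - k)))"
    by (simp add: sum.distrib[symmetric] algebra_simps)
  also have "\<dots> = (\<Sum>k\<le>Suc n. of_nat (Suc n choose k) * (A k * B (Suc n - k)))"
    by (subst sum.atMost_Suc_shift) simp
  finally show ?case by (simp add: A_def B_def)
qed

lemma pd_pow_add: "(pd i ^^ n) (x + y) = (pd i ^^ n) x + (pd i ^^ n) y"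
  by (induction n) (auto simp: pd_add)

lemma pd_pow_const: "(pd i ^^ n) (const4 c * x) = const4 c * (pd i ^^ n) x"
  by (induction n) (auto simp: pd_const_mult)

lemma pd_pow_leibniz: "(pd i ^^ n) (a*b) = (\<Sum>k\<le>n. of_nat (n choose k) * ((pd i ^^ k) a * (pd i ^^ (n-k)) b))"
  by (rule funpow_leibniz[OF pd_add pd_mult pd_of_nat_mult])




lemma pd_pow_zero: "(pd i ^^ n) 0 = 0" by (induction n) auto

lemma pd_pow_sum: "(pd i ^^ n) (\<Sum>x\<in>X. g x) = (\<Sum>x\<in>X. (pd i ^^ n) (g x))"
  by (induction X rule: infinite_finite_induct) (auto simp: pd_pow_add pd_pow_zero)

lemma pd_pow_ofnat: "(pd i ^^ n) (of_nat N * x) = of_nat N * (pd i ^^ n) x"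
  by (induction n) (auto simp: pd_of_nat_mult)

lemma pd_pow_comb: "(pd i ^^ n) (\<Sum>k\<in>K. of_nat (c k) * (u k * v k)) =
   (\<Sum>k\<in>K. \<Sum>j\<le>n. of_nat (c k * (n choose j)) * ((pd i^^j) (u k) * (pd i^^(n-j)) (v k)))"
  apply (simp only: pd_pow_sum)
  apply (simp only: pd_pow_ofnat)
  apply (simp only: pd_pow_leibniz)
  apply (simp add: sum_distrib_left mult.assoc)
  done

lemma pdm_expand:
  "pdm \<alpha> (L*h) = (\<Sum>k3\<le>\<alpha> 3. \<Sum>k2\<le>\<alpha> 2. \<Sum>k1\<le>\<alpha> 1. \<Sum>k0\<le>\<alpha> 0.
     of_nat ((((\<alpha> 3 choose k3) * (\<alpha> 2 choose k2)) * (\<alpha> 1 choose k1)) * (\<alpha> 0 choose k0)) *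
     ((pd 0 ^^ k0) ((pd 1 ^^ k1) ((pd 2 ^^ k2) ((pd 3 ^^ k3) L))) *
      (pd 0 ^^ (\<alpha> 0 - k0)) ((pd 1 ^^ (\<alpha> 1 - k1)) ((pd 2 ^^ (\<alpha> 2 - k2)) ((pd 3 ^^ (\<alpha> 3 - k3)) h)))))"
proof -
  have s3: "(pd 3 ^^ \<alpha> 3) (L*h) = (\<Sum>k3\<le>\<alpha> 3. of_nat (\<alpha> 3 choose k3) * ((pd 3 ^^ k3) L * (pd 3 ^^ (\<alpha> 3 - k3)) h))"
    by (rule pd_pow_leibniz)
  show ?thesis
    unfolding pdm_def comp_def s3
    by (simp only: pd_pow_comb pd_pow_sum)
qed




lemma eval_pdm_mult:
  assumes van: "\<forall>\<beta>. (\<exists>k. \<beta> k \<noteq> 0) \<and> (\<forall>k. \<beta> k \<le> \<alpha> k) \<longrightarrow> eval4 q (pdm \<beta> L) = 0"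
  shows "eval4 q (pdm \<alpha> (L*h)) = eval4 q L * eval4 q (pdm \<alpha> h)"
proof -
  let ?T = "\<lambda>k3 k2 k1 k0. of_nat ((((\<alpha> 3 choose k3) * (\<alpha> 2 choose k2)) * (\<alpha> 1 choose k1)) * (\<alpha> 0 choose k0)) *
     ((pd 0 ^^ k0) ((pd 1 ^^ k1) ((pd 2 ^^ k2) ((pd 3 ^^ k3) L))) *
      (pd 0 ^^ (\<alpha> 0 - k0)) ((pd 1 ^^ (\<alpha> 1 - k1)) ((pd 2 ^^ (\<alpha> 2 - k2)) ((pd 3 ^^ (\<alpha> 3 - k3)) h))))"
  let ?X = "eval4 q L * eval4 q (pdm \<alpha> h)"
  have trm: "eval4 q (?T k3 k2 k1 k0) = (if k0 = 0 then if k1 = 0 then if k2 = 0 then if k3 = 0 then ?X else 0 else 0 else 0 else 0)"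
    if b: "k3 \<le> \<alpha> 3" "k2 \<le> \<alpha> 2" "k1 \<le> \<alpha> 1" "k0 \<le> \<alpha> 0" for k3 k2 k1 k0
  proof (cases "k3 = 0 \<and> k2 = 0 \<and> k1 = 0 \<and> k0 = 0")
    case True
    then show ?thesis by (simp add: eval_mult eval_of_nat pdm_def)
  next
    case False
    define \<beta> :: "4 \<Rightarrow> nat" where "\<beta> = (\<lambda>i. if i = 0 then k0 else if i = 1 then k1 else if i = 2 then k2 else if i = 3 then k3 else 0)"
    have b0: "\<beta> 0 = k0" "\<beta> 1 = k1" "\<beta> 2 = k2" "\<beta> 3 = k3" by (simp_all add: \<beta>_def)
    have "\<exists>k. \<beta> k \<noteq> 0" using False b0 by metis
    moreover have "\<forall>k. \<beta> k \<le> \<alpha> k" using b by (auto simp: \<beta>_def)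
    ultimately have "eval4 q (pdm \<beta> L) = 0" using van by blast
    then have "eval4 q ((pd 0 ^^ k0) ((pd 1 ^^ k1) ((pd 2 ^^ k2) ((pd 3 ^^ k3) L)))) = 0"
      by (simp add: pdm_def b0)
    then show ?thesis using False by (auto simp: eval_mult)
  qed
  have "eval4 q (pdm \<alpha> (L*h)) = (\<Sum>k3\<le>\<alpha> 3. \<Sum>k2\<le>\<alpha> 2. \<Sum>k1\<le>\<alpha> 1. \<Sum>k0\<le>\<alpha> 0. eval4 q (?T k3 k2 k1 k0))"
    unfolding pdm_expand by (simp add: eval_sum)
  also have "\<dots> = (\<Sum>k3\<le>\<alpha> 3. \<Sum>k2\<le>\<alpha> 2. \<Sum>k1\<le>\<alpha> 1. \<Sum>k0\<le>\<alpha> 0.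
     (if k0 = 0 then if k1 = 0 then if k2 = 0 then if k3 = 0 then ?X else 0 else 0 else 0 else 0))"
    apply (intro sum.cong refl)
    apply (rule trm)
    apply auto
    done
  also have "\<dots> = ?X" by (simp add: sum.delta sum.delta')
  finally show ?thesis .
qed




lemma pdm_add: "pdm \<alpha> (x + y) = pdm \<alpha> x + pdm \<alpha> y"
  by (simp add: pdm_def pd_pow_add)
lemma pdm_sum: "pdm \<alpha> (\<Sum>k\<in>K. g k) = (\<Sum>k\<in>K. pdm \<alpha> (g k))"
  by (simp add: pdm_def pd_pow_sum)
lemma pdm_const: "pdm \<alpha> (const4 c * x) = const4 c * pdm \<alpha> x"
  by (simp add: pdm_def pd_pow_const)
lemma pdm_minus: "pdm \<alpha> (x - y) = pdm \<alpha> x - pdm \<alpha> y"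
  using pdm_add[of \<alpha> "x - y" y] by (simp add: eq_diff_eq)

lemma evpdm_comb: "eval4 q (pdm \<alpha> (\<Sum>k\<in>K. const4 (c k) * g k)) = (\<Sum>k\<in>K. c k * eval4 q (pdm \<alpha> (g k)))"
  by (simp add: pdm_sum pdm_const eval_sum eval_mult eval_const)

lemma mdeg_add: "mdeg (a + b) = mdeg a + mdeg b"
  by (simp add: mdeg_def lookup_add sum.distrib)

lemma homog_mult: "homog m h \<Longrightarrow> homog e L \<Longrightarrow> homog (m + e) (L * h)"
  unfolding homog_def using keys_mult[of L h] by (fastforce simp: mdeg_add)

lemma homog_add: "homog m x \<Longrightarrow> homog m y \<Longrightarrow> homog m (x + y)"
  unfolding homog_def using keys_add[of x y] by blast

lemma homog_uminus: "homog m x \<Longrightarrow> homog m (- x)"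
  unfolding homog_def by (simp add: in_keys_iff)

lemma homog_minus: "homog m x \<Longrightarrow> homog m y \<Longrightarrow> homog m (x - y)"
  using homog_add[of m x "-y"] homog_uminus[of m y] by simp

lemma homog_zero: "homog m 0" by (simp add: homog_def)

lemma homog_const: "homog m x \<Longrightarrow> homog m (const4 c * x)"
  using homog_mult[of m x 0 "const4 c"] by (simp add: homog_def const4_def mdeg_def)

lemma homog_sum: "(\<And>k. k \<in> K \<Longrightarrow> homog m (g k)) \<Longrightarrow> homog m (\<Sum>k\<in>K. g k)"
  by (induction K rule: infinite_finite_induct) (auto simp: homog_zero homog_add)

lemma jac_add: "x \<in> jac_ideal f \<Longrightarrow> y \<in> jac_ideal f \<Longrightarrow> x + y \<in> jac_ideal f"
  unfolding jac_ideal_def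
proof clarify
  fix g1 g2 :: "4 \<Rightarrow> poly4"
  show "\<exists>g. (\<Sum>i\<in>UNIV. g1 i * pd i f) + (\<Sum>i\<in>UNIV. g2 i * pd i f) = (\<Sum>i\<in>UNIV. g i * pd i f)"
    by (rule exI[of _ "\<lambda>i. g1 i + g2 i"]) (simp add: sum.distrib distrib_right)
qed

lemma jac_mult: "x \<in> jac_ideal f \<Longrightarrow> y * x \<in> jac_ideal f"
  unfolding jac_ideal_def
proof clarify
  fix g1 :: "4 \<Rightarrow> poly4"
  show "\<exists>g. y * (\<Sum>i\<in>UNIV. g1 i * pd i f) = (\<Sum>i\<in>UNIV. g i * pd i f)"
    by (rule exI[of _ "\<lambda>i. y * g1 i"]) (simp add: sum_distrib_left mult.assoc)
qed

lemma jac_zero: "0 \<in> jac_ideal f"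
  unfolding jac_ideal_def by (rule CollectI, rule exI[of _ "\<lambda>i. 0"]) simp

lemma jac_minus: "x \<in> jac_ideal f \<Longrightarrow> y \<in> jac_ideal f \<Longrightarrow> x - y \<in> jac_ideal f"
  using jac_add[of x f "(-1) * y"] jac_mult[of y f "-1"] by simp




lemma sum_shift1: "(\<Sum>k=1..M. f k) = (\<Sum>k<M. f (Suc k :: nat))"
  by (induction M) auto

lemma square_solve:
  fixes w :: "nat \<Rightarrow> nat \<Rightarrow> complex"
  assumes indep: "\<forall>c. (\<forall>j\<in>{1..M}. (\<Sum>k=1..M. c k * w k j) = 0) \<longrightarrow> (\<forall>k\<in>{1..M}. c k = 0)"
  shows "\<exists>c. \<forall>j\<in>{1..M}. (\<Sum>k=1..M. c k * w k j) = b j"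
proof -
  define A where "A = mat M M (\<lambda>(j,k). w (Suc k) (Suc j))"
  have A: "A \<in> carrier_mat M M" by (simp add: A_def)
  have Av: "(A *\<^sub>v v) $ j = (\<Sum>k<M. v $ k * w (Suc k) (Suc j))" if "j < M" "v \<in> carrier_vec M" for v j
    using that by (auto simp: A_def scalar_prod_def mult.commute lessThan_atLeast0 intro!: sum.cong)
  have "det A \<noteq> 0"
  proof
    assume "det A = 0"
    then obtain v where v: "v \<in> carrier_vec M" "v \<noteq> 0\<^sub>v M" "A *\<^sub>v v = 0\<^sub>v M"
      using det_0_iff_vec_prod_zero_field[OF A] by blast
    define c where "c k = v $ (k - 1)" for k
    have "\<forall>j\<in>{1..M}. (\<Sum>k=1..M. c k * w k j) = 0"
    proof
      fix j assume j: "j \<in> {1..M}"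
      have "(\<Sum>k=1..M. c k * w k j) = (\<Sum>k<M. v $ k * w (Suc k) (Suc (j-1)))"
        unfolding sum_shift1 c_def using j by simp
      also have "\<dots> = (A *\<^sub>v v) $ (j - 1)" using Av[of "j-1" v] j v(1) by force
      also have "\<dots> = 0" using v(3) j index_zero_vec(1)[of "j-1" M] by auto
      finally show "(\<Sum>k=1..M. c k * w k j) = 0" .
    qed
    with indep have "\<forall>k\<in>{1..M}. c k = 0" by blast
    then have "v = 0\<^sub>v M"
      using v(1) by (intro eq_vecI) (auto simp: c_def, metis One_nat_def Suc_leI atLeastAtMost_iff diff_Suc_1 le_add1 plus_1_eq_Suc)
    with v(2) show False by simp
  qed
  from det_non_zero_imp_unit[OF A this, of "()"]
  obtain B where B: "B \<in> carrier_mat M M" and AB: "A * B = 1\<^sub>m M"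
    unfolding Units_def ring_mat_def by auto
  define bv where "bv = vec M (\<lambda>j. b (Suc j))"
  define x where "x = B *\<^sub>v bv"
  have x: "x \<in> carrier_vec M" using B by (simp add: x_def bv_def)
  have "A *\<^sub>v x = bv"
    unfolding x_def using A B AB by (simp add: assoc_mult_mat_vec[symmetric] bv_def)
  define c where "c k = x $ (k - 1)" for k
  show ?thesis
  proof (intro exI ballI)
    fix j assume j: "j \<in> {1..M}"
    have "(\<Sum>k=1..M. c k * w k j) = (\<Sum>k<M. x $ k * w (Suc k) (Suc (j-1)))"
      unfolding sum_shift1 c_def using j by simp
    also have "\<dots> = (A *\<^sub>v x) $ (j - 1)" using Av[of "j-1" x] j x by force
    also have "\<dots> = b j" using \<open>A *\<^sub>v x = bv\<close> j index_vec[of "j-1" M "\<lambda>j. b (Suc j)"] by (auto simp: bv_def)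
    finally show "(\<Sum>k=1..M. c k * w k j) = b j" .
  qed
qed


theorem theorem3p7:
  fixes f L :: poly4
    and d e r M :: nat
    and m0 :: int
    and p :: "nat \<Rightarrow> 4 \<Rightarrow> complex"
    and idx :: "nat \<Rightarrow> nat"
    and A :: "nat \<Rightarrow> (4 \<Rightarrow> nat) set"
    and c :: "nat \<Rightarrow> (4 \<Rightarrow> nat) \<Rightarrow> complex"
    and D :: "nat \<Rightarrow> poly4 \<Rightarrow> complex"
  assumes f_homog: "homog d f"
    and pts: "\<forall>i\<in>{1..r}. (\<exists>k. p i k \<noteq> 0)"
    and M_pos: "M \<ge> 1"
    and idx_range: "\<forall>j\<in>{1..M}. idx j \<in> {1..r}"
    and A_fin: "\<forall>j\<in>{1..M}. finite (A j)"
    and c_nz: "\<forall>j\<in>{1..M}. \<forall>\<alpha>\<in>A j. c j \<alpha> \<noteq> 0"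
    and D_def: "\<forall>j\<in>{1..M}. \<forall>h. D j h = (\<Sum>\<alpha>\<in>A j. c j \<alpha> * eval4 (p (idx j)) (pdm \<alpha> h))"
    and hyp_i: "\<forall>m::nat. int m \<ge> m0 \<longrightarrow> (\<forall>h. homog m h \<longrightarrow>
                   (h \<in> jac_ideal f \<longleftrightarrow> (\<forall>j\<in>{1..M}. D j h = 0)))"
    and hyp_ii: "\<forall>m::nat. int m \<ge> m0 \<longrightarrow> quot_dim_eq (jac_ideal f) m M"
    and L_homog: "homog e L"
    and L_nonvan: "\<forall>i\<in>{1..r}. eval4 (p i) L \<noteq> 0"
    and L_deriv: "\<forall>j\<in>{1..M}. \<forall>\<alpha>\<in>A j. \<forall>\<beta>. (\<exists>k. \<beta> k \<noteq> 0) \<and> (\<forall>k. \<beta> k \<le> \<alpha> k)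
                     \<longrightarrow> eval4 (p (idx j)) (pdm \<beta> L) = 0"
  shows "\<forall>m::nat. int m \<ge> m0 \<longrightarrow>
           (\<forall>h. homog m h \<longrightarrow> homog (m + e) (L * h))
         \<and> (\<forall>h. homog m h \<and> h \<in> jac_ideal f \<longrightarrow> L * h \<in> jac_ideal f)
         \<and> (\<forall>h. homog m h \<and> L * h \<in> jac_ideal f \<longrightarrow> h \<in> jac_ideal f)
         \<and> (\<forall>g. homog (m + e) g \<longrightarrow> (\<exists>h. homog m h \<and> g - L * h \<in> jac_ideal f))
         \<and> (\<forall>h. homog m h \<and> h \<notin> jac_ideal f \<longrightarrow> h * L \<notin> jac_ideal f)
         \<and> (\<forall>hs. quot_basis (jac_ideal f) m M hs \<longrightarrow>
                   quot_basis (jac_ideal f) (m + e) M (\<lambda>j. L * hs j))"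
proof (intro allI impI)
  fix m :: nat
  assume m: "int m \<ge> m0"
  define J where "J = jac_ideal f"
  have me: "int (m + e) \<ge> m0" using m by simp
  have DL: "D j (L * h) = eval4 (p (idx j)) L * D j h" if j: "j \<in> {1..M}" for j h
  proof -
    have "D j (L * h) = (\<Sum>\<alpha>\<in>A j. c j \<alpha> * eval4 (p (idx j)) (pdm \<alpha> (L * h)))"
      using D_def j by blast
    also have "\<dots> = (\<Sum>\<alpha>\<in>A j. c j \<alpha> * (eval4 (p (idx j)) L * eval4 (p (idx j)) (pdm \<alpha> h)))"
    proof (rule sum.cong[OF refl])
      fix \<alpha> assume "\<alpha> \<in> A j"
      then have "\<forall>\<beta>. (\<exists>k. \<beta> k \<noteq> 0) \<and> (\<forall>k. \<beta> k \<le> \<alpha> k) \<longrightarrow> eval4 (p (idx j)) (pdm \<beta> L) = 0"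
        using L_deriv j by blast
      then show "c j \<alpha> * eval4 (p (idx j)) (pdm \<alpha> (L * h)) = c j \<alpha> * (eval4 (p (idx j)) L * eval4 (p (idx j)) (pdm \<alpha> h))"
        by (simp add: eval_pdm_mult)
    qed
    also have "\<dots> = eval4 (p (idx j)) L * D j h"
      using D_def j by (simp add: sum_distrib_left mult_ac)
    finally show ?thesis .
  qed
  have Dlin: "D j (\<Sum>k\<in>K. const4 (a k) * g k) = (\<Sum>k\<in>K. a k * D j (g k))" if j: "j \<in> {1..M}" for j K a g
  proof -
    have "D j (\<Sum>k\<in>K. const4 (a k) * g k) = (\<Sum>\<alpha>\<in>A j. c j \<alpha> * (\<Sum>k\<in>K. a k * eval4 (p (idx j)) (pdm \<alpha> (g k))))"
      using D_def j by (simp add: evpdm_comb)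
    also have "\<dots> = (\<Sum>k\<in>K. a k * (\<Sum>\<alpha>\<in>A j. c j \<alpha> * eval4 (p (idx j)) (pdm \<alpha> (g k))))"
      by (simp add: sum_distrib_left mult_ac sum.swap[of _ "A j"])
    also have "\<dots> = (\<Sum>k\<in>K. a k * D j (g k))"
      using D_def j by simp
    finally show ?thesis .
  qed
  have Dmin: "D j (x - y) = D j x - D j y" if j: "j \<in> {1..M}" for j x y
    using D_def j by (simp add: pdm_minus eval_minus sum_subtractf right_diff_distrib)
  have P1: "\<forall>h. homog m h \<longrightarrow> homog (m + e) (L * h)"
    using homog_mult L_homog by blast
  have P2: "\<forall>h. homog m h \<and> h \<in> J \<longrightarrow> L * h \<in> J"
    unfolding J_def using jac_mult by blast
  have P3: "\<forall>h. homog m h \<and> L * h \<in> J \<longrightarrow> h \<in> J"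
  proof clarify
    fix h assume h: "homog m h" "L * h \<in> J"
    have "\<forall>j\<in>{1..M}. D j (L * h) = 0"
      using hyp_i me P1 h unfolding J_def by blast
    then have "\<forall>j\<in>{1..M}. D j h = 0"
      using DL L_nonvan idx_range by fastforce
    then show "h \<in> J" using hyp_i m h(1) unfolding J_def by blast
  qed
  have P6: "\<forall>hs. quot_basis J m M hs \<longrightarrow> quot_basis J (m + e) M (\<lambda>j. L * hs j)"
  proof clarify
    fix hs assume qb: "quot_basis J m M hs"
    have hh: "\<forall>j\<in>{1..M}. homog m (hs j)"
      and ind: "\<forall>c :: nat \<Rightarrow> complex. (\<Sum>j=1..M. const4 (c j) * hs j) \<in> J \<longrightarrow> (\<forall>j\<in>{1..M}. c j = 0)"
      using qb unfolding quot_basis_def by blast+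
    have H1: "\<forall>j\<in>{1..M}. homog (m + e) (L * hs j)" using hh P1 by blast
    have Hc: "homog (m + e) (\<Sum>k=1..M. const4 (a k) * (L * hs k))" for a
      using H1 by (intro homog_sum homog_const) auto
    have H2: "\<forall>a :: nat \<Rightarrow> complex. (\<Sum>j=1..M. const4 (a j) * (L * hs j)) \<in> J \<longrightarrow> (\<forall>j\<in>{1..M}. a j = 0)"
    proof (intro allI impI)
      fix a :: "nat \<Rightarrow> complex"
      assume "(\<Sum>j=1..M. const4 (a j) * (L * hs j)) \<in> J"
      moreover have "(\<Sum>j=1..M. const4 (a j) * (L * hs j)) = L * (\<Sum>j=1..M. const4 (a j) * hs j)"
        by (simp add: sum_distrib_left mult_ac)
      moreover have "homog m (\<Sum>j=1..M. const4 (a j) * hs j)"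
        using hh by (intro homog_sum homog_const) auto
      ultimately have "(\<Sum>j=1..M. const4 (a j) * hs j) \<in> J" using P3 by auto
      then show "\<forall>j\<in>{1..M}. a j = 0" using ind by blast
    qed
    have H3: "\<exists>a :: nat \<Rightarrow> complex. G - (\<Sum>j=1..M. const4 (a j) * (L * hs j)) \<in> J"
      if G: "homog (m + e) G" for G
    proof -
      define w where "w k j = D j (L * hs k)" for k j
      have "\<forall>a. (\<forall>j\<in>{1..M}. (\<Sum>k=1..M. a k * w k j) = 0) \<longrightarrow> (\<forall>k\<in>{1..M}. a k = 0)"
      proof (intro allI impI)
        fix a :: "nat \<Rightarrow> complex"
        assume z: "\<forall>j\<in>{1..M}. (\<Sum>k=1..M. a k * w k j) = 0"
        have "\<forall>j\<in>{1..M}. D j (\<Sum>k=1..M. const4 (a k) * (L * hs k)) = 0"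
          using z by (simp add: Dlin w_def)
        then have "(\<Sum>k=1..M. const4 (a k) * (L * hs k)) \<in> J"
          using hyp_i me Hc unfolding J_def by blast
        then show "\<forall>k\<in>{1..M}. a k = 0" using H2 by blast
      qed
      from square_solve[OF this, of "\<lambda>j. D j G"]
      obtain a where a: "\<forall>j\<in>{1..M}. (\<Sum>k=1..M. a k * w k j) = D j G" by blast
      have "\<forall>j\<in>{1..M}. D j (G - (\<Sum>k=1..M. const4 (a k) * (L * hs k))) = 0"
        using a by (simp add: Dmin Dlin w_def)
      moreover have "homog (m + e) (G - (\<Sum>k=1..M. const4 (a k) * (L * hs k)))"
        using G Hc by (rule homog_minus)
      ultimately show ?thesis using hyp_i me unfolding J_def by blast
    qed
    show "quot_basis J (m + e) M (\<lambda>j. L * hs j)"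
      unfolding quot_basis_def using H1 H2 H3 by blast
  qed
  have P4: "\<forall>g. homog (m + e) g \<longrightarrow> (\<exists>h. homog m h \<and> g - L * h \<in> J)"
  proof clarify
    fix g assume g: "homog (m + e) g"
    obtain hs where qb: "quot_basis J m M hs" using hyp_ii m unfolding quot_dim_eq_def J_def by blast
    then have qb2: "quot_basis J (m + e) M (\<lambda>j. L * hs j)" using P6 by blast
    then obtain a :: "nat \<Rightarrow> complex" where a: "g - (\<Sum>j=1..M. const4 (a j) * (L * hs j)) \<in> J"
      using g unfolding quot_basis_def by blast
    have hh: "\<forall>j\<in>{1..M}. homog m (hs j)" using qb unfolding quot_basis_def by blast
    show "\<exists>h. homog m h \<and> g - L * h \<in> J"
    proof (intro exI conjI)
      show "homog m (\<Sum>j=1..M. const4 (a j) * hs j)"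
        using hh by (intro homog_sum homog_const) auto
      have "(\<Sum>j=1..M. const4 (a j) * (L * hs j)) = L * (\<Sum>j=1..M. const4 (a j) * hs j)"
        by (simp add: sum_distrib_left mult_ac)
      then show "g - L * (\<Sum>j=1..M. const4 (a j) * hs j) \<in> J" using a by simp
    qed
  qed
  have P5: "\<forall>h. homog m h \<and> h \<notin> J \<longrightarrow> h * L \<notin> J"
    using P3 by (metis mult.commute)
  show "(\<forall>h. homog m h \<longrightarrow> homog (m + e) (L * h))
         \<and> (\<forall>h. homog m h \<and> h \<in> jac_ideal f \<longrightarrow> L * h \<in> jac_ideal f)
         \<and> (\<forall>h. homog m h \<and> L * h \<in> jac_ideal f \<longrightarrow> h \<in> jac_ideal f)
         \<and> (\<forall>g. homog (m + e) g \<longrightarrow> (\<exists>h. homog m h \<and> g - L * h \<in> jac_ideal f))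
         \<and> (\<forall>h. homog m h \<and> h \<notin> jac_ideal f \<longrightarrow> h * L \<notin> jac_ideal f)
         \<and> (\<forall>hs. quot_basis (jac_ideal f) m M hs \<longrightarrow>
                   quot_basis (jac_ideal f) (m + e) M (\<lambda>j. L * hs j))"
    using P1 P2 P3 P4 P5 P6 unfolding J_def by blast
qed

end
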